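(* $\mathsf{FindHS}_{\boldsymbol{\Sigma}^0_1} \times \mathsf{FindHS}_{\boldsymbol{\Sigma}^0_1} \le_{\mathrm{sW}} \mathsf{FindHS}_{\boldsymbol{\Sigma}^0_1}$.
   Context: Strong Weihrauch reducibility: $f\le_{\mathrm{sW}} g$ iff there are computable $\Phi,\Psi$ on Baire space with $\Psi\circ G\circ\Phi$ realizing $f$ for every realizer $G$ of $g$. $f\times g$ is the parallel product $(x,z)\mapsto f(x)\times g(z)$. The Ramsey space $[\mathbb{N}]^\mathbb{N}$ is the set of strictly increasing functions $\mathbb{N}\to\mathbb{N}$ with Baire-space topology; $fg=f\circ g$. For $P\subseteq[\mathbb{N}]^\mathbb{N}$, $f$ is homogeneous for $P$ if either $fg\in P$ for all $g\in[\mathbb{N}]^\mathbb{N}$ or $fg\notin P$ for all $g$; $\mathrm{HS}(P)$ is the set of homogeneous solutions. Open sets of $[\mathbb{N}]^\mathbb{N}$ are named by enumerations of sets of finite strictly increasing strings whose cones have union the set. $\mathsf{FindHS}_{\boldsymbol{\Sigma}^0_1}$: input an open $P$ with $\mathrm{HS}(P)\cap P\ne\emptyset$, output any element of $\mathrm{HS}(P)\cap P$. *)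

theory Defs
  imports Main "HOL-Library.Nat_Bijection"
begin

type_synonym baire = "nat \<Rightarrow> nat"

datatype recf = Zero | Succ | Proj nat | Comp recf "recf list" | Prim recf recf | Mn recf

inductive eval :: "recf \<Rightarrow> nat list \<Rightarrow> nat \<Rightarrow> bool" where
  eval_Zero: "eval Zero xs 0"
| eval_Succ: "eval Succ (x # xs) (Suc x)"
| eval_Proj: "i < length xs \<Longrightarrow> eval (Proj i) xs (xs ! i)"
| eval_Comp: "length ys = length gs \<Longrightarrow> (\<forall>i<length gs. eval (gs ! i) xs (ys ! i))
              \<Longrightarrow> eval f ys y \<Longrightarrow> eval (Comp f gs) xs y"
| eval_Prim0: "eval f xs y \<Longrightarrow> eval (Prim f g) (0 # xs) y"
| eval_PrimS: "eval (Prim f g) (n # xs) r \<Longrightarrow> eval g (r # n # xs) y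
              \<Longrightarrow> eval (Prim f g) (Suc n # xs) y"
| eval_Mn: "eval f (y # xs) 0 \<Longrightarrow> (\<forall>z<y. \<exists>v. eval f (z # xs) (Suc v))
              \<Longrightarrow> eval (Mn f) xs y"

text \<open>A (total HOL) function F on Baire space is computable on the set D if some
  partial recursive M, given an output position k and (the code of) a finite prefix of
  the input p, either outputs 0 ("not yet"), diverges, or outputs v+1, where v is
  then necessarily F p k; and for every k some prefix yields an answer.  This is the
  usual notion of a partial computable functional whose domain contains D and which
  agrees with F on D.\<close>

definition prefix_code :: "baire \<Rightarrow> nat \<Rightarrow> nat" where
  "prefix_code p n = list_encode (map p [0..<n])"

definition computable_on :: "baire set \<Rightarrow> (baire \<Rightarrow> baire) \<Rightarrow> bool" where
  "computable_on D F \<longleftrightarrow> (\<exists>M. \<forall>p\<in>D. \<forall>k.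
      (\<exists>n. eval M [k, prefix_code p n] (Suc (F p k))) \<and>
      (\<forall>n v. eval M [k, prefix_code p n] (Suc v) \<longrightarrow> v = F p k))"

text \<open>A problem is given on the level of names: a set D of names of instances and a
  relation R, where R p r means that r is a name of a solution of the instance named by p.\<close>

definition realizes :: "baire set \<Rightarrow> (baire \<Rightarrow> baire \<Rightarrow> bool) \<Rightarrow> (baire \<Rightarrow> baire) \<Rightarrow> bool" where
  "realizes D R G \<longleftrightarrow> (\<forall>p\<in>D. R p (G p))"

definition sW_reducible ::
  "baire set \<Rightarrow> (baire \<Rightarrow> baire \<Rightarrow> bool) \<Rightarrow> baire set \<Rightarrow> (baire \<Rightarrow> baire \<Rightarrow> bool) \<Rightarrow> bool" where
  "sW_reducible D1 R1 D2 R2 \<longleftrightarrow> (\<exists>\<Phi> \<Psi>.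
      computable_on D1 \<Phi> \<and>
      computable_on {G (\<Phi> p) | G p. realizes D2 R2 G \<and> p \<in> D1} \<Psi> \<and>
      (\<forall>G. realizes D2 R2 G \<longrightarrow> realizes D1 R1 (\<Psi> \<circ> G \<circ> \<Phi>)))"

definition evens :: "baire \<Rightarrow> baire" where "evens p = (\<lambda>n. p (2 * n))"
definition odds :: "baire \<Rightarrow> baire" where "odds p = (\<lambda>n. p (2 * n + 1))"

definition par_dom :: "baire set \<Rightarrow> baire set \<Rightarrow> baire set" where
  "par_dom D1 D2 = {p. evens p \<in> D1 \<and> odds p \<in> D2}"

definition par_rel :: "(baire \<Rightarrow> baire \<Rightarrow> bool) \<Rightarrow> (baire \<Rightarrow> baire \<Rightarrow> bool) \<Rightarrow> baire \<Rightarrow> baire \<Rightarrow> bool" where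
  "par_rel R1 R2 p r \<longleftrightarrow> R1 (evens p) (evens r) \<and> R2 (odds p) (odds r)"

definition RS :: "baire set" where "RS = {f. strict_mono f}"

definition HS :: "baire set \<Rightarrow> baire set" where
  "HS P = {f \<in> RS. (\<forall>g\<in>RS. f \<circ> g \<in> P) \<or> (\<forall>g\<in>RS. f \<circ> g \<notin> P)}"

text \<open>Names of open sets: p i = 0 means "nothing enumerated at step i", p i = c + 1
  enumerates the finite string with code c (list_decode c), which must be strictly increasing.\<close>

definition open_name :: "baire \<Rightarrow> bool" where
  "open_name p \<longleftrightarrow> (\<forall>i c. p i = Suc c \<longrightarrow> sorted_wrt (<) (list_decode c))"

definition open_of :: "baire \<Rightarrow> baire set" where
  "open_of p = {g \<in> RS. \<exists>i c. p i = Suc c \<and>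
      map g [0..<length (list_decode c)] = list_decode c}"

definition FindHS_dom :: "baire set" where
  "FindHS_dom = {p. open_name p \<and> HS (open_of p) \<inter> open_of p \<noteq> {}}"

definition FindHS_rel :: "baire \<Rightarrow> baire \<Rightarrow> bool" where
  "FindHS_rel p r \<longleftrightarrow> r \<in> HS (open_of p) \<inter> open_of p"

end

theory Submission
  imports Defs
begin

lemma eval_det: "eval M xs y \<Longrightarrow> eval M xs y' \<Longrightarrow> y = y'"
proof (induction arbitrary: y' rule: eval.induct)
  case (eval_Zero xs)
  from eval_Zero.prems show ?case by (cases rule: eval.cases) auto
next
  case (eval_Succ x xs)
  from eval_Succ.prems show ?case by (cases rule: eval.cases) auto
next
  case (eval_Proj i xs)
  from eval_Proj.prems show ?case by (cases rule: eval.cases) auto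
next
  case (eval_Comp ys gs xs f y)
  from eval_Comp.prems show ?case
  proof (cases rule: eval.cases)
    case (eval_Comp ys')
    have "ys = ys'"
    proof (rule nth_equalityI)
      show "length ys = length ys'" using eval_Comp \<open>length ys = length gs\<close> by simp
      fix i assume "i < length ys"
      then show "ys ! i = ys' ! i" using eval_Comp.IH(1) eval_Comp(2) \<open>length ys = length gs\<close> local.eval_Comp
        by auto
    qed
    then show ?thesis using eval_Comp.IH(2) local.eval_Comp by simp
  qed
next
  case (eval_Prim0 f xs y g)
  from eval_Prim0.prems show ?case by (cases rule: eval.cases) (use eval_Prim0.IH in auto)
next
  case (eval_PrimS f g n xs r y)
  from eval_PrimS.prems show ?case
  proof (cases rule: eval.cases)
    case (eval_PrimS r')
    then show ?thesis using eval_PrimS.IH by auto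
  qed
next
  case (eval_Mn f y xs)
  from eval_Mn.prems show ?case
  proof (cases rule: eval.cases)
    case eval_Mn
    show ?thesis
    proof (rule ccontr)
      assume "y \<noteq> y'"
      then consider "y < y'" | "y' < y" by linarith
      then show False
      proof cases
        case 1
        with local.eval_Mn obtain v where "eval f (y # xs) (Suc v)" by auto
        with eval_Mn.IH(1) show False by fastforce
      next
        case 2
        with eval_Mn.IH(2) obtain v where "\<And>w. eval f (y' # xs) w \<Longrightarrow> Suc v = w" by blast
        moreover have "eval f (y' # xs) 0" using local.eval_Mn by simp
        ultimately show False by fastforce
      qed
    qed
  qed
qed


definition rc :: "nat \<Rightarrow> (nat list \<Rightarrow> nat) \<Rightarrow> bool" where
  "rc n f \<longleftrightarrow> (\<exists>M. \<forall>xs. length xs = n \<longrightarrow> eval M xs (f xs))"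

lemma rc_cong: "rc n f \<Longrightarrow> (\<And>xs. length xs = n \<Longrightarrow> f xs = g xs) \<Longrightarrow> rc n g"
  unfolding rc_def by metis

lemma rc_cong': "rc n f \<Longrightarrow> n = m \<Longrightarrow> (\<And>xs. length xs = m \<Longrightarrow> f xs = g xs) \<Longrightarrow> rc m g"
  unfolding rc_def by metis

lemma len1: "length xs = 1 \<Longrightarrow> \<exists>a. xs = [a]"
  by (auto simp: length_Suc_conv)
lemma len2: "length xs = 2 \<Longrightarrow> \<exists>a b. xs = [a, b]"
  by (auto simp: numeral_eq_Suc length_Suc_conv)
lemma len3: "length xs = 3 \<Longrightarrow> \<exists>a b c. xs = [a, b, c]"
  by (auto simp: numeral_eq_Suc length_Suc_conv)

lemma rc_zero: "rc n (\<lambda>xs. 0)"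
  unfolding rc_def using eval_Zero by blast

lemma rc_proj: "i < n \<Longrightarrow> rc n (\<lambda>xs. xs ! i)"
  unfolding rc_def using eval_Proj by (metis)

lemma rc_succ0: "rc (Suc n) (\<lambda>xs. Suc (xs ! 0))"
  unfolding rc_def
proof (intro exI allI impI)
  fix xs :: "nat list" assume "length xs = Suc n"
  then obtain x ys where "xs = x # ys" by (cases xs) auto
  then show "eval Succ xs (Suc (xs ! 0))" using eval_Succ by simp
qed

lemma rc_comp:
  assumes "rc m F" "\<And>i. i < m \<Longrightarrow> rc n (G i)"
  shows "rc n (\<lambda>xs. F (map (\<lambda>i. G i xs) [0..<m]))"
proof -
  obtain MF where MF: "\<forall>xs. length xs = m \<longrightarrow> eval MF xs (F xs)" using assms(1) rc_def by blast
  have "\<forall>i. \<exists>M. i < m \<longrightarrow> (\<forall>xs. length xs = n \<longrightarrow> eval M xs (G i xs))"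
    using assms(2) rc_def by blast
  then obtain Ms where Ms: "\<And>i. i < m \<Longrightarrow> \<forall>xs. length xs = n \<longrightarrow> eval (Ms i) xs (G i xs)"
    by metis
  show ?thesis unfolding rc_def
  proof (intro exI allI impI)
    fix xs :: "nat list" assume "length xs = n"
    show "eval (Comp MF (map Ms [0..<m])) xs (F (map (\<lambda>i. G i xs) [0..<m]))"
      by (rule eval_Comp[where ys="map (\<lambda>i. G i xs) [0..<m]"]) (use MF Ms \<open>length xs = n\<close> in auto)
  qed
qed

lemma rc_prim:
  assumes "rc n f" "rc (Suc (Suc n)) g"
  shows "rc (Suc n) (\<lambda>xs. rec_nat (f (tl xs)) (\<lambda>k r. g (r # k # tl xs)) (hd xs))"
proof -
  obtain Mf where Mf: "\<forall>xs. length xs = n \<longrightarrow> eval Mf xs (f xs)" using assms(1) rc_def by blast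
  obtain Mg where Mg: "\<forall>xs. length xs = Suc (Suc n) \<longrightarrow> eval Mg xs (g xs)" using assms(2) rc_def by blast
  have *: "eval (Prim Mf Mg) (x # ys) (rec_nat (f ys) (\<lambda>k r. g (r # k # ys)) x)"
    if "length ys = n" for x ys
  proof (induction x)
    case 0
    then show ?case using Mf that by (auto intro: eval_Prim0)
  next
    case (Suc x)
    then show ?case using Mg that by (auto intro: eval_PrimS)
  qed
  show ?thesis unfolding rc_def
  proof (intro exI allI impI)
    fix xs :: "nat list" assume "length xs = Suc n"
    then obtain x ys where "xs = x # ys" "length ys = n" by (cases xs) auto
    then show "eval (Prim Mf Mg) xs (rec_nat (f (tl xs)) (\<lambda>k r. g (r # k # tl xs)) (hd xs))"
      using * by simp
  qed
qed

lemma rc_mn: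
  assumes "rc (Suc n) f" "\<And>xs. length xs = n \<Longrightarrow> \<exists>y. f (y # xs) = 0"
  shows "rc n (\<lambda>xs. LEAST y. f (y # xs) = 0)"
proof -
  obtain M where M: "\<forall>xs. length xs = Suc n \<longrightarrow> eval M xs (f xs)" using assms(1) rc_def by blast
  show ?thesis unfolding rc_def
  proof (intro exI allI impI)
    fix xs :: "nat list" assume l: "length xs = n"
    let ?y = "LEAST y. f (y # xs) = 0"
    have 1: "f (?y # xs) = 0" using assms(2)[OF l] by (rule LeastI_ex)
    have 2: "\<forall>z<?y. \<exists>v. eval M (z # xs) (Suc v)"
    proof (intro allI impI)
      fix z assume "z < ?y"
      then have "f (z # xs) \<noteq> 0" using not_less_Least by blast
      then obtain v where "f (z # xs) = Suc v" using not0_implies_Suc by blast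
      then show "\<exists>v. eval M (z # xs) (Suc v)" using M l by (metis length_Cons)
    qed
    show "eval (Mn M) xs ?y"
      using M l 1 2 by (intro eval_Mn) (metis length_Cons, simp)
  qed
qed

lemma rc_comp1: "rc 1 F \<Longrightarrow> rc n g \<Longrightarrow> rc n (\<lambda>xs. F [g xs])"
  using rc_comp[of 1 F n "\<lambda>i. g"] by simp

lemma rc_comp2: "rc 2 F \<Longrightarrow> rc n g \<Longrightarrow> rc n h \<Longrightarrow> rc n (\<lambda>xs. F [g xs, h xs])"
  using rc_comp[of 2 F n "\<lambda>i. if i = 0 then g else h"] by (simp add: upt_rec)

lemma rc_comp3: "rc 3 F \<Longrightarrow> rc n g \<Longrightarrow> rc n h \<Longrightarrow> rc n k \<Longrightarrow> rc n (\<lambda>xs. F [g xs, h xs, k xs])"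
  using rc_comp[of 3 F n "\<lambda>i. if i = 0 then g else if i = 1 then h else k"]
  by (simp add: upt_rec)

lemma rc_Suc: "rc n g \<Longrightarrow> rc n (\<lambda>xs. Suc (g xs))"
proof -
  have "rc 1 (\<lambda>xs. Suc (xs ! 0))" using rc_succ0[of 0] by simp
  then show "rc n g \<Longrightarrow> rc n (\<lambda>xs. Suc (g xs))" using rc_comp1 by fastforce
qed

lemma rc_const: "rc n (\<lambda>xs. c)"
  by (induction c) (auto intro: rc_zero rc_Suc)

lemma rc_tl: "rc n f \<Longrightarrow> rc (Suc n) (\<lambda>xs. f (tl xs))"
proof -
  assume "rc n f"
  have "rc (Suc n) (\<lambda>xs. f (map (\<lambda>i. xs ! Suc i) [0..<n]))"
    by (rule rc_comp[of n f, OF \<open>rc n f\<close>]) (rule rc_proj, simp)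
  then show ?thesis
  proof (rule rc_cong)
    fix xs :: "nat list" assume "length xs = Suc n"
    then have "map (\<lambda>i. xs ! Suc i) [0..<n] = tl xs"
      by (cases xs) (auto intro: nth_equalityI)
    then show "f (map (\<lambda>i. xs ! Suc i) [0..<n]) = f (tl xs)" by simp
  qed
qed

lemma rc_add0: "rc 2 (\<lambda>xs. xs ! 1 + xs ! 0)"
proof -
  have "rc (Suc 1) (\<lambda>xs. rec_nat ((\<lambda>ys. ys ! 0) (tl xs)) (\<lambda>k r. (\<lambda>ys. Suc (ys ! 0)) (r # k # tl xs)) (hd xs))"
    by (rule rc_prim) (auto intro: rc_proj rc_succ0)
  then show ?thesis
  proof (rule rc_cong')
    fix xs :: "nat list" assume "length xs = 2"
    then obtain a b where "xs = [a, b]"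
      using len2 by blast
    moreover have "\<And>b. rec_nat b (\<lambda>k r. Suc r) a = b + a" by (induction a) auto
    ultimately show "rec_nat ((\<lambda>ys. ys ! 0) (tl xs)) (\<lambda>k r. (\<lambda>ys. Suc (ys ! 0)) (r # k # tl xs)) (hd xs) = xs ! 1 + xs ! 0"
      by simp
  qed simp
qed

lemma rc_add: "rc n f \<Longrightarrow> rc n g \<Longrightarrow> rc n (\<lambda>xs. f xs + g xs)"
  by (rule rc_cong[OF rc_comp2[OF rc_add0, of n g f]]) simp_all

lemma rc_pred0: "rc 1 (\<lambda>xs. xs ! 0 - 1)"
proof -
  have "rc (Suc 0) (\<lambda>xs. rec_nat ((\<lambda>ys. 0) (tl xs)) (\<lambda>k r. (\<lambda>ys. ys ! 1) (r # k # tl xs)) (hd xs))"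
    by (rule rc_prim) (auto intro: rc_proj rc_zero)
  then show ?thesis
  proof (rule rc_cong')
    fix xs :: "nat list" assume "length xs = 1"
    then obtain a where "xs = [a]"
      using len1 by blast
    then show "rec_nat ((\<lambda>ys. 0) (tl xs)) (\<lambda>k r. (\<lambda>ys. ys ! 1) (r # k # tl xs)) (hd xs) = xs ! 0 - 1"
      by (cases a) auto
  qed simp
qed

lemma rc_sub0: "rc 2 (\<lambda>xs. xs ! 1 - xs ! 0)"
proof -
  have "rc (Suc 1) (\<lambda>xs. rec_nat ((\<lambda>ys. ys ! 0) (tl xs)) (\<lambda>k r. (\<lambda>ys. ys ! 0 - 1) (r # k # tl xs)) (hd xs))"
  proof (rule rc_prim)
    show "rc (Suc (Suc 1)) (\<lambda>ys. ys ! 0 - 1)" using rc_comp1[OF rc_pred0, of _ "\<lambda>ys. ys!0"] rc_proj by simp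
  qed (auto intro: rc_proj)
  then show ?thesis
  proof (rule rc_cong')
    fix xs :: "nat list" assume "length xs = 2"
    then obtain a b where "xs = [a, b]"
      using len2 by blast
    moreover have "\<And>b. rec_nat b (\<lambda>k r. r - 1) a = b - a" by (induction a) auto
    ultimately show "rec_nat ((\<lambda>ys. ys ! 0) (tl xs)) (\<lambda>k r. (\<lambda>ys. ys ! 0 - 1) (r # k # tl xs)) (hd xs) = xs ! 1 - xs ! 0"
      by simp
  qed simp
qed

lemma rc_sub: "rc n f \<Longrightarrow> rc n g \<Longrightarrow> rc n (\<lambda>xs. f xs - g xs)"
  by (rule rc_cong[OF rc_comp2[OF rc_sub0, of n g f]]) simp_all

lemma rc_ifz0: "rc 3 (\<lambda>xs. if xs ! 0 = 0 then xs ! 1 else xs ! 2)"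
proof -
  have "rc (Suc 2) (\<lambda>xs. rec_nat ((\<lambda>ys. ys ! 0) (tl xs)) (\<lambda>k r. (\<lambda>ys. ys ! 3) (r # k # tl xs)) (hd xs))"
    by (rule rc_prim) (auto intro: rc_proj)
  then show ?thesis
  proof (rule rc_cong')
    fix xs :: "nat list" assume "length xs = 3"
    then obtain a b c where "xs = [a, b, c]"
      using len3 by blast
    then show "rec_nat ((\<lambda>ys. ys ! 0) (tl xs)) (\<lambda>k r. (\<lambda>ys. ys ! 3) (r # k # tl xs)) (hd xs) = (if xs ! 0 = 0 then xs ! 1 else xs ! 2)"
      by (cases a) auto
  qed simp
qed

lemma rc_ifz: "rc n c \<Longrightarrow> rc n f \<Longrightarrow> rc n g \<Longrightarrow> rc n (\<lambda>xs. if c xs = 0 then f xs else g xs)"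
  by (rule rc_cong[OF rc_comp3[OF rc_ifz0, of n c f g]]) simp_all

definition b2n :: "bool \<Rightarrow> nat" where "b2n P = (if P then 1 else 0)"

lemma rc_if: "rc n (\<lambda>xs. b2n (P xs)) \<Longrightarrow> rc n f \<Longrightarrow> rc n g \<Longrightarrow> rc n (\<lambda>xs. if P xs then f xs else g xs)"
  by (rule rc_cong[OF rc_ifz[of n "\<lambda>xs. b2n (P xs)" g f]]) (auto simp: b2n_def)

lemma rc_b2n_if: "rc n (\<lambda>xs. if P xs then 1 else 0) \<Longrightarrow> rc n (\<lambda>xs. b2n (P xs))"
  by (simp add: b2n_def)

lemma rc_lt: "rc n f \<Longrightarrow> rc n g \<Longrightarrow> rc n (\<lambda>xs. b2n (f xs < g xs))"
  by (rule rc_cong[OF rc_ifz[OF rc_sub[of n g f] rc_const[of n 0] rc_const[of n 1]]]) (auto simp: b2n_def)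

lemma rc_le: "rc n f \<Longrightarrow> rc n g \<Longrightarrow> rc n (\<lambda>xs. b2n (f xs \<le> g xs))"
  by (rule rc_cong[OF rc_ifz[OF rc_sub[of n f g] rc_const[of n 1] rc_const[of n 0]]]) (auto simp: b2n_def)

lemma rc_and: "rc n (\<lambda>xs. b2n (P xs \<and> Q xs))" if "rc n (\<lambda>xs. b2n (P xs))" "rc n (\<lambda>xs. b2n (Q xs))"
  by (rule rc_cong[OF rc_ifz[OF that(1) rc_const[of n 0] that(2)]]) (auto simp: b2n_def)

lemma rc_not: "rc n (\<lambda>xs. b2n (\<not> P xs))" if "rc n (\<lambda>xs. b2n (P xs))"
  by (rule rc_cong[OF rc_ifz[OF that(1) rc_const[of n 1] rc_const[of n 0]]]) (auto simp: b2n_def)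

lemma rc_or: "rc n (\<lambda>xs. b2n (P xs)) \<Longrightarrow> rc n (\<lambda>xs. b2n (Q xs)) \<Longrightarrow> rc n (\<lambda>xs. b2n (P xs \<or> Q xs))"
  using rc_not[of n "\<lambda>xs. \<not> P xs \<and> \<not> Q xs"] rc_and[of n "\<lambda>xs. \<not> P xs" "\<lambda>xs. \<not> Q xs"] rc_not
  by simp

lemma rc_eq: "rc n f \<Longrightarrow> rc n g \<Longrightarrow> rc n (\<lambda>xs. b2n (f xs = g xs))"
  by (rule rc_cong[OF rc_and[OF rc_le[of n f g] rc_le[of n g f]]]) (auto simp: b2n_def)

lemma rc_least:
  assumes "rc (Suc n) (\<lambda>ys. b2n (P ys))" "\<And>xs. length xs = n \<Longrightarrow> \<exists>y. P (y # xs)"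
  shows "rc n (\<lambda>xs. LEAST y. P (y # xs))"
proof -
  have "rc n (\<lambda>xs. LEAST y. (if P (y # xs) then 0 else 1) = (0::nat))"
    by (rule rc_mn) (use assms in \<open>auto intro: rc_if rc_const\<close>)
  then show ?thesis by (rule rc_cong) (simp add: if_split)
qed

lemma least_ball: "((LEAST y. y = (B::nat) \<or> \<not> P y) = B) \<longleftrightarrow> (\<forall>j<B. P j)"
proof
  assume h: "(LEAST y. y = B \<or> \<not> P y) = B"
  show "\<forall>j<B. P j"
  proof (intro allI impI)
    fix j assume "j < B"
    show "P j"
    proof (rule ccontr)
      assume "\<not> P j"
      then have "(LEAST y. y = B \<or> \<not> P y) \<le> j" by (intro Least_le) simp
      with h \<open>j < B\<close> show False by simp
    qed
  qed
next
  assume h: "\<forall>j<B. P j"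
  show "(LEAST y. y = B \<or> \<not> P y) = B"
  proof (rule Least_equality)
    show "B = B \<or> \<not> P B" by simp
    fix y assume "y = B \<or> \<not> P y"
    then show "B \<le> y" using h by (cases "y < B") auto
  qed
qed

lemma rc_ball:
  assumes "rc (Suc n) (\<lambda>ys. b2n (P ys))" "rc n B"
  shows "rc n (\<lambda>xs. b2n (\<forall>j<B xs. P (j # xs)))"
proof -
  have "rc n (\<lambda>xs. LEAST y. (\<lambda>ys. hd ys = B (tl ys) \<or> \<not> P ys) (y # xs))"
  proof (rule rc_least)
    have "rc (Suc n) (\<lambda>ys. b2n (ys ! 0 = B (tl ys) \<or> \<not> P ys))"
      by (intro rc_or rc_eq rc_proj rc_tl assms rc_not) simp
    then show "rc (Suc n) (\<lambda>ys. b2n (hd ys = B (tl ys) \<or> \<not> P ys))"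
      by (rule rc_cong) (metis hd_conv_nth list.size(3) nat.distinct(1))
  qed auto
  then have "rc n (\<lambda>xs. b2n ((LEAST y. y = B xs \<or> \<not> P (y # xs)) = B xs))"
    by (intro rc_eq assms) simp
  then show ?thesis by (simp add: least_ball)
qed


lemma rc_tri0: "rc 1 (\<lambda>xs. triangle (xs ! 0))"
proof -
  have "rc (Suc 0) (\<lambda>xs. rec_nat ((\<lambda>ys. 0) (tl xs)) (\<lambda>k r. (\<lambda>ys. ys ! 0 + Suc (ys ! 1)) (r # k # tl xs)) (hd xs))"
    apply (rule rc_prim)
     apply (rule rc_zero)
    apply (intro rc_add rc_Suc rc_proj)
     apply simp_all
    done
  then show ?thesis
  proof (rule rc_cong')
    fix xs :: "nat list" assume "length xs = 1"
    then obtain a where "xs = [a]" using len1 by blast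
    moreover have "rec_nat 0 (\<lambda>k r. r + Suc k) a = triangle a" by (induction a) auto
    ultimately show "rec_nat ((\<lambda>ys. 0) (tl xs)) (\<lambda>k r. (\<lambda>ys. ys ! 0 + Suc (ys ! 1)) (r # k # tl xs)) (hd xs) = triangle (xs ! 0)"
      by simp
  qed simp
qed

lemma rc_tri: "rc n f \<Longrightarrow> rc n (\<lambda>xs. triangle (f xs))"
  by (rule rc_cong[OF rc_comp1[OF rc_tri0, of n f]]) simp_all

definition tri_inv :: "nat \<Rightarrow> nat" where "tri_inv z = (LEAST s. z < triangle (Suc s))"

lemma triangle_ge: "n \<le> triangle n"
  by (induction n) auto

lemma ex_tri: "\<exists>s. z < triangle (Suc s)"
  by (metis le_imp_less_Suc order.strict_trans2 triangle_ge lessI)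

lemma rc_tri_inv0: "rc 1 (\<lambda>xs. tri_inv (xs ! 0))"
proof -
  have "rc 1 (\<lambda>xs. LEAST y. (\<lambda>ys. ys ! 1 < triangle (Suc (ys ! 0))) (y # xs))"
  proof (rule rc_least)
    show "rc (Suc 1) (\<lambda>ys. b2n (ys ! 1 < triangle (Suc (ys ! 0))))"
      by (intro rc_lt rc_tri rc_Suc rc_proj) auto
  qed (use ex_tri in \<open>simp del: triangle_Suc\<close>)
  then show ?thesis by (rule rc_cong) (simp add: tri_inv_def)
qed

lemma rc_tri_inv: "rc n f \<Longrightarrow> rc n (\<lambda>xs. tri_inv (f xs))"
  by (rule rc_cong[OF rc_comp1[OF rc_tri_inv0, of n f]]) simp_all

lemma tri_inv_props: "triangle (tri_inv z) \<le> z \<and> z < triangle (Suc (tri_inv z))"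
proof -
  have ex: "\<exists>s. z < triangle (Suc s)" by (metis le_imp_less_Suc order.strict_trans2 triangle_ge lessI)
  have 1: "z < triangle (Suc (tri_inv z))" unfolding tri_inv_def using ex by (rule LeastI_ex)
  have 2: "triangle (tri_inv z) \<le> z"
  proof (cases "tri_inv z")
    case 0 then show ?thesis by simp
  next
    case (Suc s)
    then have "s < tri_inv z" by simp
    then have "\<not> z < triangle (Suc s)" unfolding tri_inv_def by (rule not_less_Least)
    then show ?thesis using Suc by simp
  qed
  show ?thesis using 1 2 by simp
qed

definition pdf :: "nat \<Rightarrow> nat" where "pdf z = fst (prod_decode z)"
definition pds :: "nat \<Rightarrow> nat" where "pds z = snd (prod_decode z)"

lemma prod_decode_tri: "prod_decode z = (z - triangle (tri_inv z), tri_inv z - (z - triangle (tri_inv z)))"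
proof -
  let ?s = "tri_inv z" let ?m = "z - triangle ?s"
  have a: "triangle ?s \<le> z" "z < triangle ?s + Suc ?s" using tri_inv_props[of z] by auto
  have e: "triangle ?s + ?m = z" using a by simp
  have le: "?m \<le> ?s" using a by simp
  have "prod_decode z = prod_decode_aux ?s ?m" using prod_decode_triangle_add[of ?s ?m] unfolding e .
  also have "\<dots> = (?m, ?s - ?m)" using le by (subst prod_decode_aux.simps) simp
  finally show ?thesis .
qed

lemma pdf_eq: "pdf z = z - triangle (tri_inv z)" by (simp add: pdf_def prod_decode_tri)
lemma pds_eq: "pds z = tri_inv z - pdf z" by (simp add: pds_def pdf_eq prod_decode_tri)

lemma rc_pdf: "rc n f \<Longrightarrow> rc n (\<lambda>xs. pdf (f xs))"
  unfolding pdf_eq by (intro rc_sub rc_tri rc_tri_inv)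

lemma rc_pds: "rc n f \<Longrightarrow> rc n (\<lambda>xs. pds (f xs))"
  unfolding pds_eq by (intro rc_sub rc_pdf rc_tri_inv)

definition hdc :: "nat \<Rightarrow> nat" where "hdc c = pdf (c - 1)"
definition tlc :: "nat \<Rightarrow> nat" where "tlc c = pds (c - 1)"

lemma rc_hdc: "rc n f \<Longrightarrow> rc n (\<lambda>xs. hdc (f xs))"
  unfolding hdc_def by (intro rc_pdf rc_sub rc_const)

lemma rc_tlc: "rc n f \<Longrightarrow> rc n (\<lambda>xs. tlc (f xs))"
  unfolding tlc_def by (intro rc_pds rc_sub rc_const)

lemma rc_itl0: "rc 2 (\<lambda>xs. (tlc ^^ (xs ! 0)) (xs ! 1))"
proof -
  have "rc (Suc 1) (\<lambda>xs. rec_nat ((\<lambda>ys. ys ! 0) (tl xs)) (\<lambda>k r. (\<lambda>ys. tlc (ys ! 0)) (r # k # tl xs)) (hd xs))"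
    by (rule rc_prim) (auto intro: rc_tlc rc_proj)
  then show ?thesis
  proof (rule rc_cong')
    fix xs :: "nat list" assume "length xs = 2"
    then obtain a b where "xs = [a, b]" using len2 by blast
    moreover have "\<And>b. rec_nat b (\<lambda>k r. tlc r) a = (tlc ^^ a) b" by (induction a) auto
    ultimately show "rec_nat ((\<lambda>ys. ys ! 0) (tl xs)) (\<lambda>k r. (\<lambda>ys. tlc (ys ! 0)) (r # k # tl xs)) (hd xs) = (tlc ^^ (xs ! 0)) (xs ! 1)"
      by simp
  qed simp
qed

lemma rc_itl: "rc n j \<Longrightarrow> rc n c \<Longrightarrow> rc n (\<lambda>xs. (tlc ^^ j xs) (c xs))"
  by (rule rc_cong[OF rc_comp2[OF rc_itl0, of n j c]]) simp_all

lemma prod_decode_0: "prod_decode 0 = (0, 0)"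
  unfolding prod_decode_def by (subst prod_decode_aux.simps) simp

lemma ld_tlc: "list_decode (tlc x) = tl (list_decode x)"
proof (cases x)
  case 0
  then show ?thesis by (simp add: tlc_def pds_def prod_decode_0)
next
  case (Suc n)
  then show ?thesis by (simp add: tlc_def pds_def split: prod.split)
qed

lemma ld_hdc: "x \<noteq> 0 \<Longrightarrow> hd (list_decode x) = hdc x"
  by (cases x) (auto simp: hdc_def pdf_def split: prod.split)

lemma ld_nil: "list_decode x = [] \<longleftrightarrow> x = 0"
  by (metis list_decode.simps(1) list_decode_inverse list_encode.simps(1))

lemma ld_itl: "list_decode ((tlc ^^ j) c) = drop j (list_decode c)"
  by (induction j) (auto simp: ld_tlc drop_Suc tl_drop)

definition lenc :: "nat \<Rightarrow> nat" where "lenc c = (LEAST j. (tlc ^^ j) c = 0)"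
definition nthc :: "nat \<Rightarrow> nat \<Rightarrow> nat" where "nthc c j = hdc ((tlc ^^ j) c)"

lemma itl_zero: "(tlc ^^ j) c = 0 \<longleftrightarrow> length (list_decode c) \<le> j"
  by (metis ld_itl ld_nil drop_eq_Nil)

lemma lenc_eq: "lenc c = length (list_decode c)"
  unfolding lenc_def itl_zero by (rule Least_equality) auto

lemma nthc_eq: "j < length (list_decode c) \<Longrightarrow> nthc c j = list_decode c ! j"
proof -
  assume j: "j < length (list_decode c)"
  then have "(tlc ^^ j) c \<noteq> 0" using itl_zero by (simp add: not_le)
  then have "hdc ((tlc ^^ j) c) = hd (list_decode ((tlc ^^ j) c))" using ld_hdc by simp
  also have "\<dots> = list_decode c ! j" using j by (simp add: ld_itl hd_drop_conv_nth)
  finally show ?thesis by (simp add: nthc_def)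
qed

lemma rc_lenc0: "rc 1 (\<lambda>xs. lenc (xs ! 0))"
proof -
  have "rc 1 (\<lambda>xs. LEAST y. (\<lambda>ys. (tlc ^^ (ys ! 0)) (ys ! 1) = 0) (y # xs))"
  proof (rule rc_least)
    show "rc (Suc 1) (\<lambda>ys. b2n ((tlc ^^ (ys ! 0)) (ys ! 1) = 0))"
      by (intro rc_eq rc_itl rc_proj rc_const) auto
  qed (use itl_zero in auto)
  then show ?thesis by (rule rc_cong) (simp add: lenc_def)
qed

lemma rc_lenc: "rc n f \<Longrightarrow> rc n (\<lambda>xs. lenc (f xs))"
  by (rule rc_cong[OF rc_comp1[OF rc_lenc0, of n f]]) simp_all

lemma rc_nthc: "rc n c \<Longrightarrow> rc n j \<Longrightarrow> rc n (\<lambda>xs. nthc (c xs) (j xs))"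
  unfolding nthc_def by (intro rc_hdc rc_itl)


definition P1 :: "nat list \<Rightarrow> bool" where
  "P1 ys \<longleftrightarrow> nthc (ys ! 1) (ys ! 0) < nthc (ys ! 1) (Suc (ys ! 0)) \<and>
     pdf (nthc (ys ! 1) (ys ! 0)) < pdf (nthc (ys ! 1) (Suc (ys ! 0))) \<and>
     pds (nthc (ys ! 1) (ys ! 0)) < pds (nthc (ys ! 1) (Suc (ys ! 0)))"

definition P2 :: "nat list \<Rightarrow> bool" where
  "P2 ys \<longleftrightarrow> nthc (ys ! 2 - 1) (ys ! 0) = pdf (nthc (ys ! 1) (ys ! 0))"

definition P3 :: "nat list \<Rightarrow> bool" where
  "P3 ys \<longleftrightarrow> nthc (ys ! 3 - 1) (ys ! 0) = pds (nthc (ys ! 1) (ys ! 0))"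

definition checkC :: "nat list \<Rightarrow> bool" where
  "checkC xs \<longleftrightarrow> \<not> xs ! 1 = 0 \<and> \<not> xs ! 2 = 0 \<and> 2 \<le> lenc (xs ! 0) \<and>
     (\<forall>j < lenc (xs ! 0) - 1. P1 (j # xs)) \<and>
     lenc (xs ! 1 - 1) \<le> lenc (xs ! 0) \<and> (\<forall>j < lenc (xs ! 1 - 1). P2 (j # xs)) \<and>
     lenc (xs ! 2 - 1) \<le> lenc (xs ! 0) \<and> (\<forall>j < lenc (xs ! 2 - 1). P3 (j # xs))"

lemma rc_P1: "rc 4 (\<lambda>ys. b2n (P1 ys))"
  unfolding P1_def by (intro rc_and rc_lt rc_nthc rc_proj rc_Suc rc_pdf rc_pds) simp_all

lemma rc_P2: "rc 4 (\<lambda>ys. b2n (P2 ys))"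
  unfolding P2_def by (intro rc_eq rc_nthc rc_proj rc_sub rc_const rc_pdf) simp_all

lemma rc_P3: "rc 4 (\<lambda>ys. b2n (P3 ys))"
  unfolding P3_def by (intro rc_eq rc_nthc rc_proj rc_sub rc_const rc_pds) simp_all

lemma rc_checkC0: "rc 3 (\<lambda>xs. b2n (checkC xs))"
  unfolding checkC_def
  apply (intro rc_and rc_not rc_eq rc_le rc_lenc rc_proj rc_const rc_sub)
  apply (simp_all only: numeral_eq_Suc One_nat_def)
  apply simp_all
  apply (rule rc_ball[where P = P1])
  apply (rule rc_cong'[OF rc_P1], simp, simp)
  apply (intro rc_sub rc_lenc rc_proj rc_const, simp)
  apply (rule rc_ball[where P = P2])
  apply (rule rc_cong'[OF rc_P2], simp, simp)
  apply (intro rc_sub rc_lenc rc_proj rc_const, simp)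
  apply (rule rc_ball[where P = P3])
  apply (rule rc_cong'[OF rc_P3], simp, simp)
  apply (intro rc_sub rc_lenc rc_proj rc_const, simp)
  done

lemma rc_checkC: "rc n g \<Longrightarrow> rc n h \<Longrightarrow> rc n k \<Longrightarrow> rc n (\<lambda>xs. b2n (checkC [g xs, h xs, k xs]))"
  by (rule rc_cong[OF rc_comp3[OF rc_checkC0, of n g h k]]) simp_all

definition checkL :: "nat list \<Rightarrow> nat list \<Rightarrow> nat list \<Rightarrow> bool" where
  "checkL s t u \<longleftrightarrow> 2 \<le> length s \<and>
     (\<forall>j < length s - 1. s ! j < s ! Suc j \<and> pdf (s ! j) < pdf (s ! Suc j) \<and> pds (s ! j) < pds (s ! Suc j)) \<and>
     length t \<le> length s \<and> (\<forall>j < length t. t ! j = pdf (s ! j)) \<and>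
     length u \<le> length s \<and> (\<forall>j < length u. u ! j = pds (s ! j))"

lemma checkC_eq: "checkC [sc, a, b] \<longleftrightarrow> a \<noteq> 0 \<and> b \<noteq> 0 \<and>
   checkL (list_decode sc) (list_decode (a - 1)) (list_decode (b - 1))"
proof -
  let ?s = "list_decode sc" and ?t = "list_decode (a - 1)" and ?u = "list_decode (b - 1)"
  have 1: "(\<forall>j < lenc sc - 1. P1 (j # [sc, a, b])) \<longleftrightarrow>
     (\<forall>j < length ?s - 1. ?s ! j < ?s ! Suc j \<and> pdf (?s ! j) < pdf (?s ! Suc j) \<and> pds (?s ! j) < pds (?s ! Suc j))"
    by (auto simp: P1_def lenc_eq nthc_eq)
  have 2: "lenc (a - 1) \<le> lenc sc \<Longrightarrow> (\<forall>j < lenc (a - 1). P2 (j # [sc, a, b])) \<longleftrightarrow> (\<forall>j < length ?t. ?t ! j = pdf (?s ! j))"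
    by (auto simp: P2_def lenc_eq nthc_eq)
  have 3: "lenc (b - 1) \<le> lenc sc \<Longrightarrow> (\<forall>j < lenc (b - 1). P3 (j # [sc, a, b])) \<longleftrightarrow> (\<forall>j < length ?u. ?u ! j = pds (?s ! j))"
    by (auto simp: P3_def lenc_eq nthc_eq)
  show ?thesis
    unfolding checkC_def checkL_def using 1 2 3 by (auto simp: lenc_eq)
qed

definition phiF :: "baire \<Rightarrow> baire" where
  "phiF p k = (if checkC [pdf k, p (2 * pdf (pds k)), p (2 * pds (pds k) + 1)] then Suc (pdf k) else 0)"

definition phiM :: "nat list \<Rightarrow> nat" where
  "phiM xs = (if 2 * pdf (pds (xs ! 0)) < lenc (xs ! 1) \<and> 2 * pds (pds (xs ! 0)) + 1 < lenc (xs ! 1)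
     then Suc (if checkC [pdf (xs ! 0), nthc (xs ! 1) (2 * pdf (pds (xs ! 0))), nthc (xs ! 1) (2 * pds (pds (xs ! 0)) + 1)]
               then Suc (pdf (xs ! 0)) else 0) else 0)"

lemma rc_dbl: "rc n f \<Longrightarrow> rc n (\<lambda>xs. 2 * f xs)"
  by (rule rc_cong[OF rc_add[of n f f]]) simp_all

lemma rc_phiM: "rc 2 phiM"
  unfolding phiM_def
  by (intro rc_if rc_and rc_lt rc_dbl rc_add rc_pdf rc_pds rc_proj rc_lenc rc_const rc_Suc rc_checkC rc_nthc rc_zero) simp_all

definition halfN :: "nat \<Rightarrow> nat" where "halfN k = (LEAST m. k < Suc (Suc (m + m)))"

lemma halfN_eq: "halfN k = k div 2"
  unfolding halfN_def by (rule Least_equality) auto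

lemma ex_half: "\<exists>y. (x::nat) < Suc (Suc (y + y))"
  by (rule exI[of _ x]) simp

lemma rc_half0: "rc 1 (\<lambda>xs. halfN (xs ! 0))"
proof -
  have "rc 1 (\<lambda>xs. LEAST y. (\<lambda>ys. ys ! 1 < Suc (Suc (ys ! 0 + ys ! 0))) (y # xs))"
  proof (rule rc_least)
    show "rc (Suc 1) (\<lambda>ys. b2n (ys ! 1 < Suc (Suc (ys ! 0 + ys ! 0))))"
      by (intro rc_lt rc_add rc_Suc rc_proj) auto
  qed (simp add: ex_half)
  then show ?thesis by (rule rc_cong) (simp add: halfN_def)
qed

lemma rc_half: "rc n f \<Longrightarrow> rc n (\<lambda>xs. halfN (f xs))"
  by (rule rc_cong[OF rc_comp1[OF rc_half0, of n f]]) simp_all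

definition psiF :: "baire \<Rightarrow> baire" where
  "psiF h k = (if even k then pdf (h (k div 2)) else pds (h (k div 2)))"

definition psiM :: "nat list \<Rightarrow> nat" where
  "psiM xs = (if halfN (xs ! 0) < lenc (xs ! 1)
     then Suc (if 2 * halfN (xs ! 0) = xs ! 0 then pdf (nthc (xs ! 1) (halfN (xs ! 0)))
               else pds (nthc (xs ! 1) (halfN (xs ! 0)))) else 0)"

lemma rc_psiM: "rc 2 psiM"
  unfolding psiM_def
  by (intro rc_if rc_eq rc_lt rc_dbl rc_half rc_pdf rc_pds rc_proj rc_lenc rc_Suc rc_nthc rc_zero) simp_all

lemma ld_prefix: "list_decode (prefix_code p n) = map p [0..<n]"
  by (simp add: prefix_code_def)

lemma computable_onI:
  assumes "rc 2 FM"
    and "\<And>p k n. FM [k, prefix_code p n] = 0 \<or> FM [k, prefix_code p n] = Suc (F p k)"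
    and "\<And>p k. \<exists>n. FM [k, prefix_code p n] = Suc (F p k)"
  shows "computable_on D F"
proof -
  obtain M where M: "\<forall>xs. length xs = 2 \<longrightarrow> eval M xs (FM xs)" using assms(1) rc_def by blast
  show ?thesis unfolding computable_on_def
  proof (rule exI[of _ M], intro ballI allI conjI impI)
    fix p k
    obtain n where "FM [k, prefix_code p n] = Suc (F p k)" using assms(3) by blast
    moreover have "eval M [k, prefix_code p n] (FM [k, prefix_code p n])" using M[rule_format, of "[k, prefix_code p n]"] by simp
    ultimately show "\<exists>n. eval M [k, prefix_code p n] (Suc (F p k))" by auto
  next
    fix p k n v assume "eval M [k, prefix_code p n] (Suc v)"
    moreover have "eval M [k, prefix_code p n] (FM [k, prefix_code p n])" using M[rule_format, of "[k, prefix_code p n]"] by simp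
    ultimately have "FM [k, prefix_code p n] = Suc v" using eval_det by blast
    then show "v = F p k" using assms(2)[of k p n] by auto
  qed
qed

lemma computable_phiF: "computable_on D phiF"
proof (rule computable_onI[OF rc_phiM])
  fix p k n
  show "phiM [k, prefix_code p n] = 0 \<or> phiM [k, prefix_code p n] = Suc (phiF p k)"
    by (auto simp: phiM_def phiF_def lenc_eq nthc_eq ld_prefix simp del: upt_Suc)
next
  fix p k
  let ?n = "2 * pdf (pds k) + 2 * pds (pds k) + 2"
  have "phiM [k, prefix_code p ?n] = Suc (phiF p k)"
    by (auto simp: phiM_def phiF_def lenc_eq nthc_eq ld_prefix simp del: upt_Suc)
  then show "\<exists>n. phiM [k, prefix_code p n] = Suc (phiF p k)" by blast
qed

lemma computable_psiF: "computable_on D psiF"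
proof (rule computable_onI[OF rc_psiM])
  fix p k n
  show "psiM [k, prefix_code p n] = 0 \<or> psiM [k, prefix_code p n] = Suc (psiF p k)"
    by (auto simp: psiM_def psiF_def lenc_eq nthc_eq ld_prefix halfN_eq simp del: upt_Suc elim!: evenE oddE)
next
  fix p k
  have "psiM [k, prefix_code p (Suc (k div 2))] = Suc (psiF p k)"
    by (auto simp: psiM_def psiF_def lenc_eq nthc_eq ld_prefix halfN_eq simp del: upt_Suc elim!: evenE oddE)
  then show "\<exists>n. psiM [k, prefix_code p n] = Suc (psiF p k)" by blast
qed


lemma strict_mono_comp: "strict_mono f \<Longrightarrow> strict_mono g \<Longrightarrow> strict_mono (f \<circ> g)"
  by (simp add: strict_mono_def)

lemma id_RS: "id \<in> RS" by (simp add: RS_def strict_mono_def)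

lemma RS_comp: "f \<in> RS \<Longrightarrow> g \<in> RS \<Longrightarrow> f \<circ> g \<in> RS"
  by (simp add: RS_def strict_mono_comp)

lemma open_of_RS: "open_of q \<subseteq> RS" by (auto simp: open_of_def)

lemma HS_sol: "f \<in> HS P \<inter> P \<longleftrightarrow> f \<in> RS \<and> (\<forall>g\<in>RS. f \<circ> g \<in> P)"
proof
  assume a: "f \<in> HS P \<inter> P"
  then have "f \<circ> id \<in> P" by simp
  with a id_RS show "f \<in> RS \<and> (\<forall>g\<in>RS. f \<circ> g \<in> P)" unfolding HS_def by blast
next
  assume a: "f \<in> RS \<and> (\<forall>g\<in>RS. f \<circ> g \<in> P)"
  then have "f \<circ> id \<in> P" using id_RS by blast
  with a show "f \<in> HS P \<inter> P" unfolding HS_def by auto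
qed

lemma triangle_mono: "m \<le> n \<Longrightarrow> triangle m \<le> triangle n"
  by (induction n) (auto simp: le_Suc_eq)

lemma prod_encode_less: "a < a' \<Longrightarrow> b < b' \<Longrightarrow> prod_encode (a, b) < prod_encode (a', b')"
proof -
  assume h: "a < a'" "b < b'"
  have "prod_encode (a, b) = triangle (a + b) + a" by (simp add: prod_encode_def)
  also have "\<dots> < triangle (Suc (a + b))" by simp
  also have "\<dots> \<le> triangle (a' + b')" using h by (intro triangle_mono) simp
  also have "\<dots> \<le> prod_encode (a', b')" by (simp add: prod_encode_def)
  finally show ?thesis .
qed

lemma pdf_enc[simp]: "pdf (prod_encode (a, b)) = a" by (simp add: pdf_def)
lemma pds_enc[simp]: "pds (prod_encode (a, b)) = b" by (simp add: pds_def)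

lemma open_of_phiF:
  "g \<in> open_of (phiF p) \<longleftrightarrow> g \<in> RS \<and> (\<exists>s i1 i2 c1 c2. p (2 * i1) = Suc c1 \<and> p (2 * i2 + 1) = Suc c2 \<and>
      checkL s (list_decode c1) (list_decode c2) \<and> map g [0..<length s] = s)"
proof
  assume "g \<in> open_of (phiF p)"
  then obtain i c where g: "g \<in> RS" "phiF p i = Suc c" "map g [0..<length (list_decode c)] = list_decode c"
    unfolding open_of_def by blast
  let ?a = "p (2 * pdf (pds i))" and ?b = "p (2 * pds (pds i) + 1)"
  have ch: "checkC [pdf i, ?a, ?b]" and c: "c = pdf i" using g(2) by (auto simp: phiF_def split: if_splits)
  then have "?a \<noteq> 0" "?b \<noteq> 0" "checkL (list_decode c) (list_decode (?a - 1)) (list_decode (?b - 1))"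
    using checkC_eq by auto
  then show "g \<in> RS \<and> (\<exists>s i1 i2 c1 c2. p (2 * i1) = Suc c1 \<and> p (2 * i2 + 1) = Suc c2 \<and>
      checkL s (list_decode c1) (list_decode c2) \<and> map g [0..<length s] = s)"
    using g(1,3) by (intro conjI exI[of _ "list_decode c"] exI[of _ "pdf (pds i)"] exI[of _ "pds (pds i)"]
        exI[of _ "?a - 1"] exI[of _ "?b - 1"]) auto
next
  assume "g \<in> RS \<and> (\<exists>s i1 i2 c1 c2. p (2 * i1) = Suc c1 \<and> p (2 * i2 + 1) = Suc c2 \<and>
      checkL s (list_decode c1) (list_decode c2) \<and> map g [0..<length s] = s)"
  then obtain s i1 i2 c1 c2 where h: "g \<in> RS" "p (2 * i1) = Suc c1" "p (2 * i2 + 1) = Suc c2"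
    "checkL s (list_decode c1) (list_decode c2)" "map g [0..<length s] = s" by blast
  let ?k = "prod_encode (list_encode s, prod_encode (i1, i2))"
  have "checkC [list_encode s, p (2 * i1), p (2 * i2 + 1)]" using h checkC_eq by simp
  then have "phiF p ?k = Suc (list_encode s)" by (simp add: phiF_def)
  then have "\<exists>i c. phiF p i = Suc c \<and> map g [0..<length (list_decode c)] = list_decode c"
    using h(5) by (intro exI[of _ ?k] exI[of _ "list_encode s"]) simp
  then show "g \<in> open_of (phiF p)" unfolding open_of_def using h(1) by blast
qed

lemma evens_apply: "evens p i = p (2 * i)" by (simp add: evens_def)
lemma odds_apply: "odds p i = p (2 * i + 1)" by (simp add: odds_def)

lemma sorted_checkL: "checkL s t u \<Longrightarrow> sorted_wrt (<) s"
  unfolding checkL_def by (subst sorted_wrt_iff_nth_Suc_transp) (auto simp: transp_def)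

lemma phiF_dom:
  assumes p: "p \<in> par_dom FindHS_dom FindHS_dom"
  shows "phiF p \<in> FindHS_dom"
proof -
  have on: "open_name (phiF p)"
    unfolding open_name_def
  proof (intro allI impI)
    fix i c assume "phiF p i = Suc c"
    then have "checkC [pdf i, p (2 * pdf (pds i)), p (2 * pds (pds i) + 1)]" and "c = pdf i"
      by (auto simp: phiF_def split: if_splits)
    then show "sorted_wrt (<) (list_decode c)" using checkC_eq sorted_checkL by blast
  qed
  from p obtain f0 where f0: "f0 \<in> HS (open_of (evens p)) \<inter> open_of (evens p)"
    unfolding par_dom_def FindHS_dom_def by blast
  from p obtain g0 where g0: "g0 \<in> HS (open_of (odds p)) \<inter> open_of (odds p)"
    unfolding par_dom_def FindHS_dom_def by blast
  have f0': "f0 \<in> RS" "\<And>g. g \<in> RS \<Longrightarrow> f0 \<circ> g \<in> open_of (evens p)" using f0 HS_sol by blast+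
  have g0': "g0 \<in> RS" "\<And>g. g \<in> RS \<Longrightarrow> g0 \<circ> g \<in> open_of (odds p)" using g0 HS_sol by blast+
  define h where "h = (\<lambda>n. prod_encode (f0 n, g0 n))"
  have hRS: "h \<in> RS" using f0'(1) g0'(1) unfolding RS_def h_def strict_mono_def
    by (auto intro: prod_encode_less)
  have "h \<circ> g \<in> open_of (phiF p)" if g: "g \<in> RS" for g
  proof -
    obtain i1 c1 where 1: "evens p i1 = Suc c1" "map (f0 \<circ> g) [0..<length (list_decode c1)] = list_decode c1"
      using f0'(2)[OF g] unfolding open_of_def by blast
    obtain i2 c2 where 2: "odds p i2 = Suc c2" "map (g0 \<circ> g) [0..<length (list_decode c2)] = list_decode c2"
      using g0'(2)[OF g] unfolding open_of_def by blast
    have e1: "p (2 * i1) = Suc c1" using 1(1) by (simp add: evens_apply)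
    have e2: "p (2 * i2 + 1) = Suc c2" using 2(1) by (simp add: odds_apply)
    let ?t = "list_decode c1" and ?u = "list_decode c2"
    define L where "L = max 2 (max (length ?t) (length ?u))"
    define s where "s = map (h \<circ> g) [0..<L]"
    have smf0: "strict_mono (f0 \<circ> g)" and smg0: "strict_mono (g0 \<circ> g)"
      using f0'(1) g0'(1) g by (auto simp: RS_def strict_mono_comp)
    have hs: "h \<circ> g \<in> RS" using hRS g by (rule RS_comp)
    have "checkL s ?t ?u"
      unfolding checkL_def
    proof (intro conjI allI impI)
      show "2 \<le> length s" by (simp add: s_def L_def)
      show "length ?t \<le> length s" "length ?u \<le> length s" by (auto simp: s_def L_def)
    next
      fix j assume "j < length s - 1"
      then have j: "j < L" "Suc j < L" by (auto simp: s_def)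
      show "s ! j < s ! Suc j" using hs j unfolding s_def RS_def strict_mono_def by simp
      show "pdf (s ! j) < pdf (s ! Suc j)" using smf0 j unfolding s_def h_def strict_mono_def by simp
      show "pds (s ! j) < pds (s ! Suc j)" using smg0 j unfolding s_def h_def strict_mono_def by simp
    next
      fix j assume j: "j < length ?t"
      then have "j < L" by (simp add: L_def)
      have "?t ! j = map (f0 \<circ> g) [0..<length ?t] ! j" using 1(2) by simp
      also have "\<dots> = f0 (g j)" using j by simp
      finally show "?t ! j = pdf (s ! j)" using \<open>j < L\<close> by (simp add: s_def h_def)
    next
      fix j assume j: "j < length ?u"
      then have "j < L" by (simp add: L_def)
      have "?u ! j = map (g0 \<circ> g) [0..<length ?u] ! j" using 2(2) by simp
      also have "\<dots> = g0 (g j)" using j by simp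
      finally show "?u ! j = pds (s ! j)" using \<open>j < L\<close> by (simp add: s_def h_def)
    qed
    moreover have "map (h \<circ> g) [0..<length s] = s" by (simp add: s_def)
    ultimately show ?thesis unfolding open_of_phiF using hs e1 e2
      by (intro conjI exI[of _ s] exI[of _ i1] exI[of _ i2] exI[of _ c1] exI[of _ c2]) simp_all
  qed
  then have "h \<in> HS (open_of (phiF p)) \<inter> open_of (phiF p)" using hRS HS_sol by blast
  then show ?thesis using on unfolding FindHS_dom_def by blast
qed

lemma evens_psiF: "evens (psiF r) = (\<lambda>n. pdf (r n))"
  by (auto simp: evens_def psiF_def)

lemma odds_psiF: "odds (psiF r) = (\<lambda>n. pds (r n))"
  by (auto simp: odds_def psiF_def)

lemma psiF_correct:
  assumes r: "r \<in> HS (open_of (phiF p)) \<inter> open_of (phiF p)"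
  shows "par_rel FindHS_rel FindHS_rel p (psiF r)"
proof -
  have rRS: "r \<in> RS" and all: "\<And>g. g \<in> RS \<Longrightarrow> r \<circ> g \<in> open_of (phiF p)"
    using r HS_sol by blast+
  have sm1: "strict_mono (\<lambda>n. pdf (r n))" and sm2: "strict_mono (\<lambda>n. pds (r n))"
  proof -
    have "pdf (r n) < pdf (r (Suc n)) \<and> pds (r n) < pds (r (Suc n))" for n
    proof -
      have "(\<lambda>j. j + n) \<in> RS" by (simp add: RS_def strict_mono_def)
      then have "r \<circ> (\<lambda>j. j + n) \<in> open_of (phiF p)" by (rule all)
      then obtain s i1 i2 c1 c2 where h: "checkL s (list_decode c1) (list_decode c2)"
          "map (r \<circ> (\<lambda>j. j + n)) [0..<length s] = s"
        unfolding open_of_phiF by blast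
      then have l: "2 \<le> length s" by (simp add: checkL_def)
      have sj: "s ! j = r (j + n)" if "j < length s" for j
      proof -
        have "s ! j = map (r \<circ> (\<lambda>j. j + n)) [0..<length s] ! j" using h(2) by simp
        also have "\<dots> = r (j + n)" using that by simp
        finally show ?thesis .
      qed
      have a0: "s ! 0 = r n" using sj[of 0] l by force
      have a1: "s ! 1 = r (Suc n)" using sj[of 1] l by simp
      moreover have "pdf (s ! 0) < pdf (s ! Suc 0) \<and> pds (s ! 0) < pds (s ! Suc 0)"
        using h(1) l unfolding checkL_def by auto
      ultimately show ?thesis using a0 a1 by simp
    qed
    then show "strict_mono (\<lambda>n. pdf (r n))" "strict_mono (\<lambda>n. pds (r n))"
      by (auto simp: strict_mono_Suc_iff)
  qed
  have sol: "(\<lambda>n. pdf (r n)) \<in> HS (open_of (evens p)) \<inter> open_of (evens p) \<and>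
             (\<lambda>n. pds (r n)) \<in> HS (open_of (odds p)) \<inter> open_of (odds p)"
    unfolding HS_sol
  proof (intro conjI ballI)
    show "(\<lambda>n. pdf (r n)) \<in> RS" "(\<lambda>n. pds (r n)) \<in> RS" using sm1 sm2 by (simp_all add: RS_def)
  next
    fix g assume g: "g \<in> RS"
    then have "r \<circ> g \<in> open_of (phiF p)" by (rule all)
    then obtain s i1 i2 c1 c2 where h: "p (2 * i1) = Suc c1" "p (2 * i2 + 1) = Suc c2"
        "checkL s (list_decode c1) (list_decode c2)" "map (r \<circ> g) [0..<length s] = s"
      unfolding open_of_phiF by blast
    have sj: "s ! j = r (g j)" if "j < length s" for j
    proof -
      have "s ! j = map (r \<circ> g) [0..<length s] ! j" using h(4) by simp
      also have "\<dots> = r (g j)" using that by simp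
      finally show ?thesis .
    qed
    have c1: "length (list_decode c1) \<le> length s" "\<forall>j<length (list_decode c1). list_decode c1 ! j = pdf (s ! j)"
      and c2: "length (list_decode c2) \<le> length s" "\<forall>j<length (list_decode c2). list_decode c2 ! j = pds (s ! j)"
      using h(3) unfolding checkL_def by auto
    have "(\<lambda>n. pdf (r n)) \<circ> g \<in> RS" using sm1 g by (simp add: RS_def strict_mono_comp)
    moreover have "map ((\<lambda>n. pdf (r n)) \<circ> g) [0..<length (list_decode c1)] = list_decode c1"
      using c1 sj by (intro nth_equalityI) auto
    ultimately show "(\<lambda>n. pdf (r n)) \<circ> g \<in> open_of (evens p)"
      unfolding open_of_def using h(1) by (auto simp: evens_apply)
    have "(\<lambda>n. pds (r n)) \<circ> g \<in> RS" using sm2 g by (simp add: RS_def strict_mono_comp)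
    moreover have "map ((\<lambda>n. pds (r n)) \<circ> g) [0..<length (list_decode c2)] = list_decode c2"
      using c2 sj by (intro nth_equalityI) auto
    ultimately show "(\<lambda>n. pds (r n)) \<circ> g \<in> open_of (odds p)"
      unfolding open_of_def using h(2) by (auto simp: odds_apply)
  qed
  then show ?thesis
    unfolding par_rel_def FindHS_rel_def evens_psiF odds_psiF by blast
qed

theorem mainTheorem10:
  shows "sW_reducible (par_dom FindHS_dom FindHS_dom) (par_rel FindHS_rel FindHS_rel)
           FindHS_dom FindHS_rel"
  unfolding sW_reducible_def
proof (intro exI conjI allI impI)
  show "computable_on (par_dom FindHS_dom FindHS_dom) phiF" by (rule computable_phiF)
  show "computable_on {G (phiF p) |G p. realizes FindHS_dom FindHS_rel G \<and> p \<in> par_dom FindHS_dom FindHS_dom} psiF"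
    by (rule computable_psiF)
  fix G assume G: "realizes FindHS_dom FindHS_rel G"
  show "realizes (par_dom FindHS_dom FindHS_dom) (par_rel FindHS_rel FindHS_rel) (psiF \<circ> G \<circ> phiF)"
    unfolding realizes_def
  proof
    fix p assume p: "p \<in> par_dom FindHS_dom FindHS_dom"
    then have "phiF p \<in> FindHS_dom" by (rule phiF_dom)
    then have "G (phiF p) \<in> HS (open_of (phiF p)) \<inter> open_of (phiF p)"
      using G unfolding realizes_def FindHS_rel_def by blast
    then show "par_rel FindHS_rel FindHS_rel p ((psiF \<circ> G \<circ> phiF) p)"
      using psiF_correct by simp
  qed
qed

end
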